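(* Let $\mathcal{T}$ be an $l$-eligible microdata table and run the three-phase algorithm described in the context (arbitrary tie-breaking). Phase Three consists of at most $h(\ddot{R})$ rounds, where $\ddot{R}$ is the residue set at the end of Phase Two.
   Context: A microdata table $\mathcal{T}$ is a multiset of $n$ tuples with values on $d$ quasi-identifier (QI) attributes and one sensitive attribute (SA). For a multiset $Q$ and SA value $v$, $h(Q,v)$ is the number of tuples in $Q$ with SA value $v$, $h(Q)=\max_v h(Q,v)$, pillars of $Q$ are the $v$ with $h(Q,v)=h(Q)$; $Q$ is $l$-eligible if $|Q|\ge l\cdot h(Q)$. Let $Q_1,\dots,Q_s$ be the maximal classes of tuples of $\mathcal{T}$ with identical values on all QI attributes; the algorithm only moves tuples from these groups into a residue set $R$ (initially empty), and terminates as soon as $R$ becomes $l$-eligible. Terminology (w.r.t. current state): a group $Q$ is thin if $|Q|=l\cdot h(Q)$, fat if $|Q|\ge l\cdot h(Q)+1$; conflicting if some pillar of $Q$ is a pillar of $R$ (its conflicting pillars, set $C(Q)$); dead if thin and conflicting, alive otherwise; an SA value $v$ is alive if some alive group $Q$ has $h(Q,v)>0$. Phase One: for each $i$, while $Q_i$ is not $l$-eligible, move a tuple of a pillar of $Q_i$ to $R$. Phase Two: repeat: if no SA value is alive, go to Phase Three; else pick an alive SA value $v$ minimizing $h(R,v)$ and an alive group $Q$ with $h(Q,v)>0$; if $Q$ is fat move one tuple with SA value $v$ to $R$, if thin move one tuple of each pillar of $Q$ to $R$. Phase Three proceeds in rounds. Step 1: let $P$ be the set of pillars of $R$ and $S=\emptyset$;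 while $P\ne\emptyset$, pick a group $Q$ minimizing $|C(Q)\cap P|$, add it to $S$, and set $P\leftarrow P\cap C(Q)$; then for each $Q\in S$ move one tuple of each pillar of $Q$ to $R$. Step 2: for each group $Q$ that is now alive, repeat until $Q$ is dead: if $Q$ is fat, move to $R$ a tuple of $Q$ whose SA value is not a pillar of $R$; if $Q$ is thin and non-conflicting, move one tuple of each pillar of $Q$ to $R$. All ties are broken arbitrarily. *)

theory Defs
  imports "HOL-Library.Multiset"
begin

text \<open>A microdata table is a multiset of tuples (QI value, SA value); the QI value
of type 'q stands for the vector of the d QI attributes.  Since the algorithm and all
notions only look at SA values inside groups, a group / the residue set is represented
by the multiset of SA values of its tuples.\<close>

definition hv :: "'v multiset \<Rightarrow> 'v \<Rightarrow> nat" where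
  "hv Q v = count Q v"

definition hmax :: "'v multiset \<Rightarrow> nat" where
  "hmax Q = (if Q = {#} then 0 else Max (count Q ` set_mset Q))"

definition pillars :: "'v multiset \<Rightarrow> 'v set" where
  "pillars Q = {v. hv Q v = hmax Q}"

definition eligible :: "nat \<Rightarrow> 'v multiset \<Rightarrow> bool" where
  "eligible l Q \<longleftrightarrow> size Q \<ge> l * hmax Q"

definition thin :: "nat \<Rightarrow> 'v multiset \<Rightarrow> bool" where
  "thin l Q \<longleftrightarrow> size Q = l * hmax Q"

definition fat :: "nat \<Rightarrow> 'v multiset \<Rightarrow> bool" where
  "fat l Q \<longleftrightarrow> size Q \<ge> l * hmax Q + 1"

definition cpillars :: "'v multiset \<Rightarrow> 'v multiset \<Rightarrow> 'v set" where
  "cpillars R Q = pillars Q \<inter> pillars R"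

definition conflicting :: "'v multiset \<Rightarrow> 'v multiset \<Rightarrow> bool" where
  "conflicting R Q \<longleftrightarrow> cpillars R Q \<noteq> {}"

definition dead :: "nat \<Rightarrow> 'v multiset \<Rightarrow> 'v multiset \<Rightarrow> bool" where
  "dead l R Q \<longleftrightarrow> thin l Q \<and> conflicting R Q"

definition alive :: "nat \<Rightarrow> 'v multiset \<Rightarrow> 'v multiset \<Rightarrow> bool" where
  "alive l R Q \<longleftrightarrow> \<not> dead l R Q"

definition alive_val :: "nat \<Rightarrow> 'q set \<Rightarrow> ('q \<Rightarrow> 'v multiset) \<Rightarrow> 'v multiset \<Rightarrow> 'v \<Rightarrow> bool" where
  "alive_val l Qs G R v \<longleftrightarrow> (\<exists>q\<in>Qs. alive l R (G q) \<and> hv (G q) v > 0)"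

definition group_ids :: "('q \<times> 'v) multiset \<Rightarrow> 'q set" where
  "group_ids T = fst ` set_mset T"

definition group_of :: "('q \<times> 'v) multiset \<Rightarrow> 'q \<Rightarrow> 'v multiset" where
  "group_of T q = image_mset snd (filter_mset (\<lambda>t. fst t = q) T)"

datatype ('q, 'v) ctrl =
    P1 "'q list"                        \<comment> \<open>Phase One, remaining groups Q_i, Q_(i+1), ...\<close>
  | P2
  | Pend 'q "'v list" "('q, 'v) ctrl"   \<comment> \<open>pending single-tuple moves from a group, then continue\<close>
  | S1 "'v set" "'q set"                \<comment> \<open>Phase Three Step 1, greedy selection: P and S\<close>
  | S1Exec "'q list"                    \<comment> \<open>Phase Three Step 1, moving pillars of groups in S\<close>
  | S2 "'q list"                        \<comment> \<open>Phase Three Step 2, groups alive after Step 1\<close>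

record ('q, 'v) conf =
  grp :: "'q \<Rightarrow> 'v multiset"
  res :: "'v multiset"
  ctl :: "('q, 'v) ctrl"
  rnd :: nat                    \<comment> \<open>number of Phase Three rounds started so far\<close>
  rdd :: "'v multiset"          \<comment> \<open>residue set at the end of Phase Two\<close>

definition mv :: "'q \<Rightarrow> 'v \<Rightarrow> ('q, 'v) conf \<Rightarrow> ('q, 'v) conf" where
  "mv q v c = c\<lparr>grp := (grp c)(q := grp c q - {#v#}), res := res c + {#v#}\<rparr>"

definition init_conf :: "('q \<times> 'v) multiset \<Rightarrow> 'q list \<Rightarrow> ('q, 'v) conf" where
  "init_conf T qs = \<lparr>grp = group_of T, res = {#}, ctl = P1 qs, rnd = 0, rdd = {#}\<rparr>"

text \<open>Phase One always runs to completion; from then on, every step is only possible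
while R is not l-eligible (the algorithm terminates as soon as R is l-eligible, checked
after every single tuple move).\<close>

inductive step :: "nat \<Rightarrow> 'q set \<Rightarrow> ('q, 'v) conf \<Rightarrow> ('q, 'v) conf \<Rightarrow> bool"
  for l :: nat and Qs :: "'q set" where
  p1_move: "\<lbrakk>ctl c = P1 (q # qs); \<not> eligible l (grp c q); v \<in> pillars (grp c q)\<rbrakk>
      \<Longrightarrow> step l Qs c (mv q v c)"
| p1_next: "\<lbrakk>ctl c = P1 (q # qs); eligible l (grp c q)\<rbrakk>
      \<Longrightarrow> step l Qs c (c\<lparr>ctl := P1 qs\<rparr>)"
| p1_done: "ctl c = P1 [] \<Longrightarrow> step l Qs c (c\<lparr>ctl := P2\<rparr>)"
| pend_move: "\<lbrakk>\<not> eligible l (res c); ctl c = Pend q (v # vs) k\<rbrakk>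
      \<Longrightarrow> step l Qs c ((mv q v c)\<lparr>ctl := Pend q vs k\<rparr>)"
| pend_done: "\<lbrakk>\<not> eligible l (res c); ctl c = Pend q [] k\<rbrakk>
      \<Longrightarrow> step l Qs c (c\<lparr>ctl := k\<rparr>)"
| p2_to3: "\<lbrakk>\<not> eligible l (res c); ctl c = P2; \<not> (\<exists>v. alive_val l Qs (grp c) (res c) v)\<rbrakk>
      \<Longrightarrow> step l Qs c (c\<lparr>ctl := S1 (pillars (res c)) {}, rnd := 1, rdd := res c\<rparr>)"
| p2_fat: "\<lbrakk>\<not> eligible l (res c); ctl c = P2; alive_val l Qs (grp c) (res c) v;
      \<forall>w. alive_val l Qs (grp c) (res c) w \<longrightarrow> hv (res c) v \<le> hv (res c) w;
      q \<in> Qs; alive l (res c) (grp c q); hv (grp c q) v > 0; fat l (grp c q)\<rbrakk>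
      \<Longrightarrow> step l Qs c (mv q v c)"
| p2_thin: "\<lbrakk>\<not> eligible l (res c); ctl c = P2; alive_val l Qs (grp c) (res c) v;
      \<forall>w. alive_val l Qs (grp c) (res c) w \<longrightarrow> hv (res c) v \<le> hv (res c) w;
      q \<in> Qs; alive l (res c) (grp c q); hv (grp c q) v > 0; thin l (grp c q);
      distinct vs; set vs = pillars (grp c q)\<rbrakk>
      \<Longrightarrow> step l Qs c (c\<lparr>ctl := Pend q vs P2\<rparr>)"
| s1_pick: "\<lbrakk>\<not> eligible l (res c); ctl c = S1 P S; P \<noteq> {}; q \<in> Qs;
      \<forall>q'\<in>Qs. card (cpillars (res c) (grp c q) \<inter> P) \<le> card (cpillars (res c) (grp c q') \<inter> P)\<rbrakk>
      \<Longrightarrow> step l Qs c (c\<lparr>ctl := S1 (P \<inter> cpillars (res c) (grp c q)) (insert q S)\<rparr>)"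
| s1_exec: "\<lbrakk>\<not> eligible l (res c); ctl c = S1 {} S; distinct qs; set qs = S\<rbrakk>
      \<Longrightarrow> step l Qs c (c\<lparr>ctl := S1Exec qs\<rparr>)"
| s1x_step: "\<lbrakk>\<not> eligible l (res c); ctl c = S1Exec (q # qs); distinct vs; set vs = pillars (grp c q)\<rbrakk>
      \<Longrightarrow> step l Qs c (c\<lparr>ctl := Pend q vs (S1Exec qs)\<rparr>)"
| s1x_done: "\<lbrakk>\<not> eligible l (res c); ctl c = S1Exec []; distinct qs;
      set qs = {q \<in> Qs. alive l (res c) (grp c q)}\<rbrakk>
      \<Longrightarrow> step l Qs c (c\<lparr>ctl := S2 qs\<rparr>)"
| s2_dead: "\<lbrakk>\<not> eligible l (res c); ctl c = S2 (q # qs); dead l (res c) (grp c q)\<rbrakk>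
      \<Longrightarrow> step l Qs c (c\<lparr>ctl := S2 qs\<rparr>)"
| s2_fat: "\<lbrakk>\<not> eligible l (res c); ctl c = S2 (q # qs); fat l (grp c q);
      v \<in># grp c q; v \<notin> pillars (res c)\<rbrakk>
      \<Longrightarrow> step l Qs c (mv q v c)"
| s2_thin: "\<lbrakk>\<not> eligible l (res c); ctl c = S2 (q # qs); thin l (grp c q);
      \<not> conflicting (res c) (grp c q); distinct vs; set vs = pillars (grp c q)\<rbrakk>
      \<Longrightarrow> step l Qs c (c\<lparr>ctl := Pend q vs (S2 (q # qs))\<rparr>)"
| s2_done: "\<lbrakk>\<not> eligible l (res c); ctl c = S2 []\<rbrakk>
      \<Longrightarrow> step l Qs c (c\<lparr>ctl := S1 (pillars (res c)) {}, rnd := rnd c + 1\<rparr>)"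

end

theory Submission imports Defs begin
lemma hmax_ge: "count Q v \<le> hmax Q"
proof (cases "Q = {#}")
  case True then show ?thesis by simp
next
  case False
  show ?thesis
  proof (cases "v \<in># Q")
    case True then show ?thesis using False unfolding hmax_def by simp
  next
    case False then have "count Q v = 0" by (simp add: not_in_iff)
    then show ?thesis by simp
  qed
qed

lemma hmax_le_iff: "hmax Q \<le> B \<longleftrightarrow> (\<forall>v. count Q v \<le> B)"
proof
  assume a: "hmax Q \<le> B" show "\<forall>v. count Q v \<le> B"
  proof
    fix v show "count Q v \<le> B" using hmax_ge[of Q v] a by linarith
  qed
next
  assume a: "\<forall>v. count Q v \<le> B"
  show "hmax Q \<le> B"
  proof (cases "Q = {#}")
    case True then show ?thesis by (simp add: hmax_def)
  next
    case False then show ?thesis using a unfolding hmax_def by (simp add: Max_le_iff)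
  qed
qed

lemma hmax_empty[simp]: "hmax {#} = 0" by (simp add: hmax_def)

lemma hmax_attained: "Q \<noteq> {#} \<Longrightarrow> \<exists>v. v \<in># Q \<and> count Q v = hmax Q"
proof -
  assume ne: "Q \<noteq> {#}"
  have "Max (count Q ` set_mset Q) \<in> count Q ` set_mset Q" using ne by (intro Max_in) auto
  then obtain v where "v \<in># Q" "count Q v = Max (count Q ` set_mset Q)" by auto
  then show ?thesis using ne unfolding hmax_def by auto
qed

lemma hmax_pos: "Q \<noteq> {#} \<Longrightarrow> hmax Q \<ge> 1"
proof -
  assume "Q \<noteq> {#}"
  then obtain v where a: "v \<in># Q" and b: "count Q v = hmax Q" using hmax_attained by blast
  from a have "count Q v > 0" by (simp only: count_greater_zero_iff)
  then show ?thesis using b by linarith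
qed

lemma pillars_sub: "Q \<noteq> {#} \<Longrightarrow> pillars Q \<subseteq> set_mset Q"
proof
  fix v assume "Q \<noteq> {#}" "v \<in> pillars Q"
  then have "count Q v \<ge> 1" using hmax_pos unfolding pillars_def hv_def by auto
  then show "v \<in># Q" by (simp add: Suc_le_eq)
qed

lemma finite_pillars: "Q \<noteq> {#} \<Longrightarrow> finite (pillars Q)"
  using pillars_sub finite_subset by blast

lemma pillars_ne: "Q \<noteq> {#} \<Longrightarrow> pillars Q \<noteq> {}"
  using hmax_attained unfolding pillars_def hv_def by blast

lemma pillars_empty[simp]: "pillars {#} = UNIV" by (simp add: pillars_def hv_def)

lemma hmax_mono: "(\<And>v. count A v \<le> count B v) \<Longrightarrow> hmax A \<le> hmax B"
proof -
  assume a: "\<And>v. count A v \<le> count B v"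
  have "\<forall>v. count A v \<le> hmax B"
  proof
    fix v show "count A v \<le> hmax B" using a[of v] hmax_ge[of B v] by linarith
  qed
  then show ?thesis using hmax_le_iff by blast
qed

lemma nonpillar_lt: "v \<notin> pillars Q \<Longrightarrow> count Q v < hmax Q"
  using hmax_ge[of Q v] unfolding pillars_def hv_def by auto

lemma hmax_diff_pillars: "Q \<noteq> {#} \<Longrightarrow> hmax (Q - mset_set (pillars Q)) + 1 \<le> hmax Q"
proof -
  assume ne: "Q \<noteq> {#}"
  have "\<forall>v. count (Q - mset_set (pillars Q)) v \<le> hmax Q - 1"
  proof
    fix v
    show "count (Q - mset_set (pillars Q)) v \<le> hmax Q - 1"
    proof (cases "v \<in> pillars Q")
      case True then show ?thesis using finite_pillars[OF ne] by (simp add: pillars_def hv_def)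
    next
      case False then show ?thesis using nonpillar_lt[OF False] by simp
    qed
  qed
  then have "hmax (Q - mset_set (pillars Q)) \<le> hmax Q - 1" using hmax_le_iff by blast
  then show ?thesis using hmax_pos[OF ne] by linarith
qed

lemma pillars_times_le: "Q \<noteq> {#} \<Longrightarrow> card (pillars Q) * hmax Q \<le> size Q"
proof -
  assume ne: "Q \<noteq> {#}"
  define N where "N = (\<Sum>v\<in>pillars Q. replicate_mset (hmax Q) v)"
  have cN: "count N v = (if v \<in> pillars Q then hmax Q else 0)" for v
    unfolding N_def count_sum using finite_pillars[OF ne]
    by (simp add: count_replicate_mset) 
  have "N \<subseteq># Q" unfolding subseteq_mset_def cN by (simp add: pillars_def hv_def)
  then have "size N \<le> size Q" by (rule size_mset_mono)
  moreover have "size N = card (pillars Q) * hmax Q" unfolding N_def by simp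
  ultimately show ?thesis by simp
qed

lemma elig_diff_pillars: "eligible l Q \<Longrightarrow> eligible l (Q - mset_set (pillars Q))"
proof (cases "Q = {#}")
  case True then show ?thesis by (simp add: eligible_def)
next
  case ne: False
  assume el: "eligible l Q"
  define g where "g = hmax Q"
  define p where "p = card (pillars Q)"
  have sub: "mset_set (pillars Q) \<subseteq># Q"
    unfolding subseteq_mset_def
  proof
    fix v show "count (mset_set (pillars Q)) v \<le> count Q v"
    proof (cases "v \<in> pillars Q")
      case True then show ?thesis using finite_pillars[OF ne] hmax_pos[OF ne] by (simp add: pillars_def hv_def)
    next
      case False then show ?thesis by simp
    qed
  qed
  have sz: "size (Q - mset_set (pillars Q)) = size Q - p"
    using size_Diff_submset[OF sub] p_def by simp
  have h: "hmax (Q - mset_set (pillars Q)) \<le> g - 1" using hmax_diff_pillars[OF ne] g_def by linarith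
  have a: "l * g \<le> size Q" using el g_def eligible_def by auto
  have b: "p * g \<le> size Q" using pillars_times_le[OF ne] p_def g_def by simp
  have g1: "g \<ge> 1" using hmax_pos[OF ne] g_def by simp
  have "l * (g - 1) \<le> size Q - p"
  proof (cases "p \<ge> l")
    case True
    have "l * (g - 1) \<le> p * (g - 1)" using True by (simp add: mult_le_mono1)
    also have "\<dots> = p * g - p" using g1 by (simp add: diff_mult_distrib2)
    finally show ?thesis using b by linarith
  next
    case False
    have "l * (g - 1) = l * g - l" using g1 by (simp add: diff_mult_distrib2)
    then show ?thesis using a False by linarith
  qed
  then have "l * hmax (Q - mset_set (pillars Q)) \<le> size (Q - mset_set (pillars Q))"
  proof -
    have "l * hmax (Q - mset_set (pillars Q)) \<le> l * (g - 1)" using h by (rule mult_le_mono2)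
    then show ?thesis using sz \<open>l * (g - 1) \<le> size Q - p\<close> by linarith
  qed
  then show ?thesis by (simp add: eligible_def)
qed

lemma not_elig_ne: "\<not> eligible l R \<Longrightarrow> R \<noteq> {#}"
  by (auto simp: eligible_def)

lemma elig_empty: "eligible l {#}" by (simp add: eligible_def)

lemma thin_elig: "thin l Q \<Longrightarrow> eligible l Q" by (simp add: thin_def eligible_def)

lemma elig_diff_list:
  assumes "eligible l Gs" "distinct ws" "set ws = pillars Gs"
  shows "eligible l (Gs - mset ws)"
proof (cases "Gs = {#}")
  case True then show ?thesis by (simp add: elig_empty)
next
  case False
  have "mset ws = mset_set (pillars Gs)" using assms(2,3) mset_set_set by metis
  then show ?thesis using elig_diff_pillars[OF assms(1)] by simp
qed

lemma mv_simps[simp]: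
  "grp (mv q v c) = (grp c)(q := grp c q - {#v#})"
  "res (mv q v c) = res c + {#v#}"
  "ctl (mv q v c) = ctl c"
  "rnd (mv q v c) = rnd c"
  "rdd (mv q v c) = rdd c"
  by (simp_all add: mv_def)

lemma hmax_add_nonpillar:
  assumes "count R v < hmax R"
  shows "hmax (R + {#v#}) = hmax R"
proof -
  have "\<forall>w. count (R + {#v#}) w \<le> hmax R"
  proof
    fix w show "count (R + {#v#}) w \<le> hmax R"
      using assms hmax_ge[of R w] by (cases "w = v") auto
  qed
  then have "hmax (R + {#v#}) \<le> hmax R" using hmax_le_iff by blast
  moreover have "hmax R \<le> hmax (R + {#v#})" by (rule hmax_mono) simp
  ultimately show ?thesis by simp
qed

lemma hmax_diff_le: "hmax (Q - {#v#}) \<le> hmax Q"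
  by (rule hmax_mono) simp

lemma sum_size_mv:
  assumes "finite S"
  shows "(\<Sum>q\<in>S. size (grp c q)) \<le> (\<Sum>q\<in>S. size (grp (mv q' v c) q)) + 1"
proof (cases "q' \<in> S")
  case False
  then have "(\<Sum>q\<in>S. size (grp (mv q' v c) q)) = (\<Sum>q\<in>S. size (grp c q))"
    by (intro sum.cong) auto
  then show ?thesis by simp
next
  case True
  have a: "(\<Sum>q\<in>S. size (grp c q)) = size (grp c q') + (\<Sum>q\<in>S - {q'}. size (grp c q))"
    using True assms by (simp add: sum.remove)
  have b: "(\<Sum>q\<in>S. size (grp (mv q' v c) q)) = size (grp c q' - {#v#}) + (\<Sum>q\<in>S - {q'}. size (grp c q))"
    using True assms by (simp add: sum.remove)
  have "size (grp c q') \<le> size (grp c q' - {#v#}) + 1"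
    by (cases "v \<in># grp c q'") (auto simp: size_Diff_singleton)
  then show ?thesis using a b by linarith
qed

lemma cons_mv:
  assumes "size R0 + (\<Sum>q\<in>S. size (G0 q)) \<le> size (res c) + (\<Sum>q\<in>S. size (grp c q))" "finite S"
  shows "size R0 + (\<Sum>q\<in>S. size (G0 q)) \<le> size (res (mv q' v c)) + (\<Sum>q\<in>S. size (grp (mv q' v c) q))"
  using assms sum_size_mv[OF assms(2), of c q' v] by simp

lemma no_alive_elig:
  assumes "\<not> (\<exists>v. alive_val l Qs G R v)" "q \<in> Qs"
  shows "eligible l (G q)"
proof (cases "alive l R (G q)")
  case True
  then have "\<forall>v. count (G q) v = 0" using assms unfolding alive_val_def hv_def by (auto simp: not_in_iff)
  then have "G q = {#}" by (simp add: multiset_eqI)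
  then show ?thesis by (simp add: elig_empty)
next
  case False then show ?thesis unfolding alive_def dead_def using thin_elig by blast
qed

section \<open>Invariants\<close>

definition base :: "nat \<Rightarrow> 'q set \<Rightarrow> ('q,'v) conf \<Rightarrow> 'v multiset \<Rightarrow> ('q \<Rightarrow> 'v multiset) \<Rightarrow> bool" where
  "base l Qs c R0 G0 \<longleftrightarrow> 1 \<le> rnd c \<and> \<not> eligible l R0 \<and>
     l * (rnd c - 1) + l * hmax R0 + size (rdd c) \<le> l * hmax (rdd c) + size R0 \<and>
     (\<forall>q\<in>Qs. eligible l (G0 q))"

definition st_s1 :: "nat \<Rightarrow> 'q set \<Rightarrow> ('q,'v) conf \<Rightarrow> 'v multiset \<Rightarrow> ('q \<Rightarrow> 'v multiset) \<Rightarrow> 'v set \<Rightarrow> 'q set \<Rightarrow> bool" where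
  "st_s1 l Qs c R0 G0 P S \<longleftrightarrow> res c = R0 \<and> grp c = G0 \<and> S \<subseteq> Qs \<and> P \<subseteq> pillars R0 \<and>
     (\<forall>v\<in>pillars R0 - P. \<exists>q\<in>S. v \<notin> pillars (G0 q)) \<and>
     ((\<exists>q\<in>S. G0 q = {#}) \<longrightarrow> P \<noteq> {} \<and> (\<forall>q'\<in>Qs. P \<subseteq> cpillars R0 (G0 q')))"

definition ex_core :: "'q set \<Rightarrow> ('q,'v) conf \<Rightarrow> 'v multiset \<Rightarrow> ('q \<Rightarrow> 'v multiset) \<Rightarrow> 'q set \<Rightarrow> 'q set \<Rightarrow> bool" where
  "ex_core Qs c R0 G0 S Done \<longleftrightarrow> S \<subseteq> Qs \<and> (\<forall>v\<in>pillars R0. \<exists>q\<in>S. v \<notin> pillars (G0 q)) \<and>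
     (\<forall>q\<in>S. G0 q \<noteq> {#}) \<and> Done \<subseteq> S \<and>
     size R0 + (\<Sum>q\<in>S. size (G0 q)) \<le> size (res c) + (\<Sum>q\<in>S. size (grp c q))"

definition st_ex :: "'q set \<Rightarrow> ('q,'v) conf \<Rightarrow> 'v multiset \<Rightarrow> ('q \<Rightarrow> 'v multiset) \<Rightarrow> 'q set \<Rightarrow> 'q set \<Rightarrow> 'q list \<Rightarrow> bool" where
  "st_ex Qs c R0 G0 S Done qs \<longleftrightarrow> ex_core Qs c R0 G0 S Done \<and> distinct qs \<and> set qs \<inter> Done = {} \<and>
     S = Done \<union> set qs \<and>
     (\<forall>q'. grp c q' = (if q' \<in> Done then G0 q' - mset_set (pillars (G0 q')) else G0 q')) \<and>
     (\<forall>v. count (res c) v \<le> count R0 v + card {q\<in>Done. v \<in> pillars (G0 q)})"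

definition st_exp :: "'q set \<Rightarrow> ('q,'v) conf \<Rightarrow> 'v multiset \<Rightarrow> ('q \<Rightarrow> 'v multiset) \<Rightarrow> 'q set \<Rightarrow> 'q set \<Rightarrow> 'q \<Rightarrow> 'v list \<Rightarrow> 'q list \<Rightarrow> 'v list \<Rightarrow> bool" where
  "st_exp Qs c R0 G0 S Done q vs qs ws \<longleftrightarrow> ex_core Qs c R0 G0 S Done \<and> distinct (q # qs) \<and>
     set (q # qs) \<inter> Done = {} \<and> S = Done \<union> set (q # qs) \<and>
     distinct (ws @ vs) \<and> set (ws @ vs) = pillars (G0 q) \<and>
     (\<forall>q'. grp c q' = (if q' \<in> Done then G0 q' - mset_set (pillars (G0 q'))
                      else if q' = q then G0 q - mset ws else G0 q')) \<and>
     (\<forall>v. count (res c) v \<le> count R0 v + card {q\<in>Done. v \<in> pillars (G0 q)} + count (mset ws) v)"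

definition st_s2 :: "nat \<Rightarrow> 'q set \<Rightarrow> ('q,'v) conf \<Rightarrow> 'v multiset \<Rightarrow> ('q \<Rightarrow> 'v multiset) \<Rightarrow> 'q set \<Rightarrow> 'q list \<Rightarrow> bool" where
  "st_s2 l Qs c R0 G0 S lst \<longleftrightarrow> S \<subseteq> Qs \<and> S \<noteq> {} \<and> hmax (res c) + 1 \<le> hmax R0 + card S \<and>
     size R0 + (\<Sum>q\<in>S. size (G0 q)) \<le> size (res c) + (\<Sum>q\<in>S. size (grp c q)) \<and>
     (\<forall>q\<in>S. hmax (grp c q) + 1 \<le> hmax (G0 q)) \<and>
     (\<forall>q\<in>S. q \<notin> set lst \<longrightarrow> thin l (grp c q))"

definition pend2 :: "nat \<Rightarrow> ('q,'v) conf \<Rightarrow> 'q \<Rightarrow> 'v list \<Rightarrow> bool" where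
  "pend2 l c q vs \<longleftrightarrow> (\<exists>Gs ws. eligible l Gs \<and> distinct (ws @ vs) \<and> set (ws @ vs) = pillars Gs \<and>
     grp c q = Gs - mset ws \<and> (\<forall>v\<in>set vs. count (res c) v < hmax (res c)))"

definition inv3 :: "nat \<Rightarrow> 'q set \<Rightarrow> ('q,'v) conf \<Rightarrow> bool" where
  "inv3 l Qs c \<longleftrightarrow> (\<exists>R0 G0. base l Qs c R0 G0 \<and> (
     (\<exists>P S. ctl c = S1 P S \<and> st_s1 l Qs c R0 G0 P S) \<or>
     (\<exists>qs S Done. ctl c = S1Exec qs \<and> st_ex Qs c R0 G0 S Done qs) \<or>
     (\<exists>q vs qs S Done ws. ctl c = Pend q vs (S1Exec qs) \<and> st_exp Qs c R0 G0 S Done q vs qs ws) \<or>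
     (\<exists>lst S. ctl c = S2 lst \<and> st_s2 l Qs c R0 G0 S lst \<and> (\<forall>q\<in>Qs. eligible l (grp c q))) \<or>
     (\<exists>q vs qs S. ctl c = Pend q vs (S2 (q # qs)) \<and> st_s2 l Qs c R0 G0 S (q # qs) \<and>
        pend2 l c q vs \<and> (\<forall>q'\<in>Qs. q' \<noteq> q \<longrightarrow> eligible l (grp c q')))))"

definition inv12 :: "('q,'v) conf \<Rightarrow> bool" where
  "inv12 c \<longleftrightarrow> rnd c = 0 \<and> ((\<exists>qs. ctl c = P1 qs) \<or> ctl c = P2 \<or> (\<exists>q vs. ctl c = Pend q vs P2))"

definition invA :: "nat \<Rightarrow> 'q set \<Rightarrow> ('q,'v) conf \<Rightarrow> bool" where
  "invA l Qs c \<longleftrightarrow> inv12 c \<or> inv3 l Qs c"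

lemma base_cong: "rnd c' = rnd c \<Longrightarrow> rdd c' = rdd c \<Longrightarrow> base l Qs c R0 G0 \<Longrightarrow> base l Qs c' R0 G0"
  by (simp add: base_def)

lemma inv3_final: "inv3 l Qs c \<Longrightarrow> rnd c \<le> hmax (rdd c)"
proof -
  assume "inv3 l Qs c"
  then obtain R0 G0 where b: "base l Qs c R0 G0" unfolding inv3_def by blast
  then have r: "1 \<le> rnd c" and ne: "\<not> eligible l R0"
    and ineq: "l * (rnd c - 1) + l * hmax R0 + size (rdd c) \<le> l * hmax (rdd c) + size R0"
    by (auto simp: base_def)
  from ne have lt: "size R0 < l * hmax R0" by (simp add: eligible_def)
  then have "l * (rnd c - 1) < l * hmax (rdd c)" using ineq by linarith
  then have "rnd c - 1 < hmax (rdd c)" by simp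
  then show ?thesis using r by linarith
qed


lemma inv3_S1E: "inv3 l Qs c \<Longrightarrow> ctl c = S1 P S \<Longrightarrow> \<exists>R0 G0. base l Qs c R0 G0 \<and> st_s1 l Qs c R0 G0 P S"
  by (auto simp: inv3_def)
lemma inv3_S1XE: "inv3 l Qs c \<Longrightarrow> ctl c = S1Exec qs \<Longrightarrow> \<exists>R0 G0 S Done. base l Qs c R0 G0 \<and> st_ex Qs c R0 G0 S Done qs"
  by (auto simp: inv3_def)
lemma inv3_S2E: "inv3 l Qs c \<Longrightarrow> ctl c = S2 lst \<Longrightarrow> \<exists>R0 G0 S. base l Qs c R0 G0 \<and> st_s2 l Qs c R0 G0 S lst \<and> (\<forall>q\<in>Qs. eligible l (grp c q))"
  by (auto simp: inv3_def)
lemma inv3_PendE: "inv3 l Qs c \<Longrightarrow> ctl c = Pend q vs k \<Longrightarrow>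
   (\<exists>qs R0 G0 S Done ws. k = S1Exec qs \<and> base l Qs c R0 G0 \<and> st_exp Qs c R0 G0 S Done q vs qs ws) \<or>
   (\<exists>qs R0 G0 S. k = S2 (q # qs) \<and> base l Qs c R0 G0 \<and> st_s2 l Qs c R0 G0 S (q # qs) \<and> pend2 l c q vs \<and> (\<forall>q'\<in>Qs. q' \<noteq> q \<longrightarrow> eligible l (grp c q')))"
  by (auto simp: inv3_def)
lemma inv3_notP1: "inv3 l Qs c \<Longrightarrow> ctl c \<noteq> P1 qs" by (auto simp: inv3_def)
lemma inv3_notP2: "inv3 l Qs c \<Longrightarrow> ctl c \<noteq> P2" by (auto simp: inv3_def)
lemma inv3_notPendP2: "inv3 l Qs c \<Longrightarrow> ctl c \<noteq> Pend q vs P2" by (auto simp: inv3_def)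

lemma inv3_S1I: "base l Qs c R0 G0 \<Longrightarrow> ctl c = S1 P S \<Longrightarrow> st_s1 l Qs c R0 G0 P S \<Longrightarrow> inv3 l Qs c"
  unfolding inv3_def by blast
lemma inv3_S1XI: "base l Qs c R0 G0 \<Longrightarrow> ctl c = S1Exec qs \<Longrightarrow> st_ex Qs c R0 G0 S Done qs \<Longrightarrow> inv3 l Qs c"
  unfolding inv3_def by blast
lemma inv3_PXI: "base l Qs c R0 G0 \<Longrightarrow> ctl c = Pend q vs (S1Exec qs) \<Longrightarrow> st_exp Qs c R0 G0 S Done q vs qs ws \<Longrightarrow> inv3 l Qs c"
  unfolding inv3_def by blast
lemma inv3_S2I: "base l Qs c R0 G0 \<Longrightarrow> ctl c = S2 lst \<Longrightarrow> st_s2 l Qs c R0 G0 S lst \<Longrightarrow> (\<forall>q\<in>Qs. eligible l (grp c q)) \<Longrightarrow> inv3 l Qs c"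
  unfolding inv3_def by blast
lemma inv3_P2I: "base l Qs c R0 G0 \<Longrightarrow> ctl c = Pend q vs (S2 (q # qs)) \<Longrightarrow> st_s2 l Qs c R0 G0 S (q # qs) \<Longrightarrow>
   pend2 l c q vs \<Longrightarrow> (\<forall>q'\<in>Qs. q' \<noteq> q \<longrightarrow> eligible l (grp c q')) \<Longrightarrow> inv3 l Qs c"
  unfolding inv3_def by blast

lemma case_p2_to3:
  assumes "invA l Qs c" "\<not> eligible l (res c)" "ctl c = P2" "\<not> (\<exists>v. alive_val l Qs (grp c) (res c) v)"
  shows "invA l Qs (c\<lparr>ctl := S1 (pillars (res c)) {}, rnd := 1, rdd := res c\<rparr>)"
proof -
  let ?c = "c\<lparr>ctl := S1 (pillars (res c)) {}, rnd := 1, rdd := res c\<rparr>"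
  have b: "base l Qs ?c (res c) (grp c)"
    using assms(2) no_alive_elig[OF assms(4)] by (simp add: base_def)
  have t: "st_s1 l Qs ?c (res c) (grp c) (pillars (res c)) {}"
    by (simp add: st_s1_def)
  have "inv3 l Qs ?c" by (rule inv3_S1I[OF b _ t]) simp
  then show ?thesis by (simp add: invA_def)
qed

lemma case_s1_pick:
  assumes I: "invA l Qs c" and ne: "\<not> eligible l (res c)" and ct: "ctl c = S1 P S" and Pne: "P \<noteq> {}"
    and qQ: "q \<in> Qs"
    and mn: "\<forall>q'\<in>Qs. card (cpillars (res c) (grp c q) \<inter> P) \<le> card (cpillars (res c) (grp c q') \<inter> P)"
  shows "invA l Qs (c\<lparr>ctl := S1 (P \<inter> cpillars (res c) (grp c q)) (insert q S)\<rparr>)"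
proof -
  let ?c = "c\<lparr>ctl := S1 (P \<inter> cpillars (res c) (grp c q)) (insert q S)\<rparr>"
  have "inv3 l Qs c" using I ct by (auto simp: invA_def inv12_def)
  then obtain R0 G0 where B: "base l Qs c R0 G0" and T: "st_s1 l Qs c R0 G0 P S"
    using inv3_S1E ct by blast
  have R: "res c = R0" and G: "grp c = G0" and SQ: "S \<subseteq> Qs" and PR: "P \<subseteq> pillars R0"
    and cov: "\<forall>v\<in>pillars R0 - P. \<exists>q\<in>S. v \<notin> pillars (G0 q)"
    and em: "(\<exists>q\<in>S. G0 q = {#}) \<longrightarrow> P \<noteq> {} \<and> (\<forall>q'\<in>Qs. P \<subseteq> cpillars R0 (G0 q'))"
    using T by (auto simp: st_s1_def)
  define P' where "P' = P \<inter> cpillars R0 (G0 q)"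
  have finP: "finite P" using PR finite_pillars not_elig_ne ne R finite_subset by metis
  have "st_s1 l Qs ?c R0 G0 P' (insert q S)"
    unfolding st_s1_def
  proof (intro conjI)
    show "res ?c = R0" "grp ?c = G0" using R G by auto
    show "insert q S \<subseteq> Qs" using SQ qQ by auto
    show "P' \<subseteq> pillars R0" using PR P'_def by auto
    show "\<forall>v\<in>pillars R0 - P'. \<exists>q\<in>insert q S. v \<notin> pillars (G0 q)"
      using cov P'_def unfolding cpillars_def by blast
    show "(\<exists>q\<in>insert q S. G0 q = {#}) \<longrightarrow> P' \<noteq> {} \<and> (\<forall>q'\<in>Qs. P' \<subseteq> cpillars R0 (G0 q'))"
    proof
      assume "\<exists>q\<in>insert q S. G0 q = {#}"
      then consider "\<exists>q\<in>S. G0 q = {#}" | "G0 q = {#}" by auto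
      then have "P' = P \<and> (\<forall>q'\<in>Qs. P \<subseteq> cpillars R0 (G0 q'))"
      proof cases
        case 1
        then have "\<forall>q'\<in>Qs. P \<subseteq> cpillars R0 (G0 q')" using em by blast
        then show ?thesis using qQ P'_def by blast
      next
        case 2
        then have Cq: "cpillars R0 (G0 q) = pillars R0" by (simp add: cpillars_def)
        then have P'P: "P' = P" using PR P'_def by auto
        have "\<forall>q'\<in>Qs. P \<subseteq> cpillars R0 (G0 q')"
        proof
          fix q' assume "q' \<in> Qs"
          then have "card P \<le> card (cpillars R0 (G0 q') \<inter> P)"
            using mn R G Cq PR by (metis Int_absorb1)
          then have "cpillars R0 (G0 q') \<inter> P = P"
            using card_seteq[OF finP, of "cpillars R0 (G0 q') \<inter> P"] by blast
          then show "P \<subseteq> cpillars R0 (G0 q')" by blast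
        qed
        then show ?thesis using P'P by blast
      qed
      then show "P' \<noteq> {} \<and> (\<forall>q'\<in>Qs. P' \<subseteq> cpillars R0 (G0 q'))" using Pne by auto
    qed
  qed
  moreover have "base l Qs ?c R0 G0" using B by (simp add: base_def)
  ultimately have "inv3 l Qs ?c" using R G P'_def by (intro inv3_S1I[of l Qs ?c R0 G0]) auto
  then show ?thesis by (simp add: invA_def)
qed


lemma case_s1_exec:
  assumes I: "invA l Qs c" and ct: "ctl c = S1 {} S" and d: "distinct qs" and sq: "set qs = S"
  shows "invA l Qs (c\<lparr>ctl := S1Exec qs\<rparr>)"
proof -
  let ?c = "c\<lparr>ctl := S1Exec qs\<rparr>"
  have "inv3 l Qs c" using I ct by (auto simp: invA_def inv12_def)
  then obtain R0 G0 where B: "base l Qs c R0 G0" and T: "st_s1 l Qs c R0 G0 {} S"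
    using inv3_S1E ct by blast
  have R: "res c = R0" and G: "grp c = G0" and SQ: "S \<subseteq> Qs"
    and cov: "\<forall>v\<in>pillars R0. \<exists>q\<in>S. v \<notin> pillars (G0 q)"
    and em: "\<forall>q\<in>S. G0 q \<noteq> {#}"
    using T by (auto simp: st_s1_def)
  have "st_ex Qs ?c R0 G0 S {} qs"
    unfolding st_ex_def ex_core_def using R G SQ cov em d sq by auto
  moreover have "base l Qs ?c R0 G0" using B by (simp add: base_def)
  ultimately have "inv3 l Qs ?c" by (intro inv3_S1XI[of l Qs ?c R0 G0 qs S "{}"]) auto
  then show ?thesis by (simp add: invA_def)
qed

lemma case_s1x_step:
  assumes I: "invA l Qs c" and ct: "ctl c = S1Exec (q # qs)" and d: "distinct vs" and sv: "set vs = pillars (grp c q)"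
  shows "invA l Qs (c\<lparr>ctl := Pend q vs (S1Exec qs)\<rparr>)"
proof -
  let ?c = "c\<lparr>ctl := Pend q vs (S1Exec qs)\<rparr>"
  have "inv3 l Qs c" using I ct by (auto simp: invA_def inv12_def)
  then obtain R0 G0 S Done where B: "base l Qs c R0 G0" and T: "st_ex Qs c R0 G0 S Done (q # qs)"
    using inv3_S1XE ct by blast
  have gq: "grp c q = G0 q" using T unfolding st_ex_def by (auto dest: spec[of _ q])
  have "st_exp Qs ?c R0 G0 S Done q vs qs []"
    using T d sv gq unfolding st_ex_def st_exp_def ex_core_def by auto
  moreover have "base l Qs ?c R0 G0" using B by (simp add: base_def)
  ultimately have "inv3 l Qs ?c" by (intro inv3_PXI[of l Qs ?c R0 G0 q vs qs S Done "[]"]) auto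
  then show ?thesis by (simp add: invA_def)
qed

lemma case_pend_move:
  assumes fin: "finite Qs" and I: "invA l Qs c" and ct: "ctl c = Pend q (v # vs) k"
  shows "invA l Qs ((mv q v c)\<lparr>ctl := Pend q vs k\<rparr>)"
proof -
  let ?c = "(mv q v c)\<lparr>ctl := Pend q vs k\<rparr>"
  show ?thesis
  proof (cases "inv12 c")
    case True
    then have "k = P2" "rnd c = 0" using ct by (auto simp: inv12_def)
    then show ?thesis by (simp add: invA_def inv12_def)
  next
    case False
    then have I3: "inv3 l Qs c" using I by (simp add: invA_def)
    from inv3_PendE[OF I3 ct] show ?thesis
    proof (elim disjE exE conjE)
      fix qs R0 G0 S Done ws
      assume k: "k = S1Exec qs" and B: "base l Qs c R0 G0" and T: "st_exp Qs c R0 G0 S Done q (v # vs) qs ws"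
      have core: "ex_core Qs c R0 G0 S Done" and SQ: "S \<subseteq> Qs"
        and dq: "distinct (q # qs)" and disj: "set (q # qs) \<inter> Done = {}" and Seq: "S = Done \<union> set (q # qs)"
        and dw: "distinct (ws @ v # vs)" and sw: "set (ws @ v # vs) = pillars (G0 q)"
        and gf: "\<forall>q'. grp c q' = (if q' \<in> Done then G0 q' - mset_set (pillars (G0 q'))
                      else if q' = q then G0 q - mset ws else G0 q')"
        and cf: "\<forall>w. count (res c) w \<le> count R0 w + card {q\<in>Done. w \<in> pillars (G0 q)} + count (mset ws) w"
        using T unfolding st_exp_def ex_core_def by auto
      have finS: "finite S" using SQ fin finite_subset by blast
      have qD: "q \<notin> Done" using disj by auto
      have core': "ex_core Qs ?c R0 G0 S Done"
        using core cons_mv[OF _ finS, of R0 G0 c q v] unfolding ex_core_def by simp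
      have gf': "\<forall>q'. grp ?c q' = (if q' \<in> Done then G0 q' - mset_set (pillars (G0 q'))
                      else if q' = q then G0 q - mset (ws @ [v]) else G0 q')"
        using gf qD by (auto simp: diff_diff_add_mset)
      have cf': "\<forall>w. count (res ?c) w \<le> count R0 w + card {q\<in>Done. w \<in> pillars (G0 q)} + count (mset (ws @ [v])) w"
        using cf by auto
      have "st_exp Qs ?c R0 G0 S Done q vs qs (ws @ [v])"
        unfolding st_exp_def using core' dq disj Seq dw sw gf' cf' by auto
      moreover have "base l Qs ?c R0 G0" using B by (simp add: base_def)
      ultimately have "inv3 l Qs ?c" using k by (intro inv3_PXI[of l Qs ?c R0 G0 q vs qs S Done "ws @ [v]"]) auto
      then show ?thesis by (simp add: invA_def)
    next
      fix qs R0 G0 S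
      assume k: "k = S2 (q # qs)" and B: "base l Qs c R0 G0" and T: "st_s2 l Qs c R0 G0 S (q # qs)"
        and PD: "pend2 l c q (v # vs)" and EL: "\<forall>q'\<in>Qs. q' \<noteq> q \<longrightarrow> eligible l (grp c q')"
      obtain Gs ws where el: "eligible l Gs" and dw: "distinct (ws @ v # vs)" and sw: "set (ws @ v # vs) = pillars Gs"
        and gq: "grp c q = Gs - mset ws" and lt: "\<forall>w\<in>set (v # vs). count (res c) w < hmax (res c)"
        using PD unfolding pend2_def by blast
      have SQ: "S \<subseteq> Qs" using T by (simp add: st_s2_def)
      have finS: "finite S" using SQ fin finite_subset by blast
      have hm: "hmax (res ?c) = hmax (res c)" using lt hmax_add_nonpillar by auto
      have "st_s2 l Qs ?c R0 G0 S (q # qs)"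
        unfolding st_s2_def
      proof (intro conjI)
        show "S \<subseteq> Qs" "S \<noteq> {}" using T by (auto simp: st_s2_def)
        show "hmax (res ?c) + 1 \<le> hmax R0 + card S" using T hm by (simp add: st_s2_def)
        show "size R0 + (\<Sum>q\<in>S. size (G0 q)) \<le> size (res ?c) + (\<Sum>q\<in>S. size (grp ?c q))"
          using T cons_mv[OF _ finS, of R0 G0 c q v] by (simp add: st_s2_def)
        show "\<forall>q'\<in>S. hmax (grp ?c q') + 1 \<le> hmax (G0 q')"
        proof
          fix q' assume "q' \<in> S"
          then have "hmax (grp c q') + 1 \<le> hmax (G0 q')" using T by (simp add: st_s2_def)
          moreover have "hmax (grp ?c q') \<le> hmax (grp c q')" using hmax_diff_le[of "grp c q" v] by auto
          ultimately show "hmax (grp ?c q') + 1 \<le> hmax (G0 q')" by linarith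
        qed
        show "\<forall>q'\<in>S. q' \<notin> set (q # qs) \<longrightarrow> thin l (grp ?c q')"
          using T by (auto simp: st_s2_def)
      qed
      moreover have "pend2 l ?c q vs"
        unfolding pend2_def
      proof (intro exI[of _ Gs] exI[of _ "ws @ [v]"] conjI)
        show "eligible l Gs" by (rule el)
        show "distinct ((ws @ [v]) @ vs)" using dw by simp
        show "set ((ws @ [v]) @ vs) = pillars Gs" using sw by simp
        show "grp ?c q = Gs - mset (ws @ [v])" using gq by (simp add: diff_diff_add_mset)
        show "\<forall>w\<in>set vs. count (res ?c) w < hmax (res ?c)"
          using lt dw hm by auto
      qed
      moreover have "\<forall>q'\<in>Qs. q' \<noteq> q \<longrightarrow> eligible l (grp ?c q')" using EL by simp
      moreover have "base l Qs ?c R0 G0" using B by (simp add: base_def)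
      ultimately have "inv3 l Qs ?c" using k
        by (intro inv3_P2I[of l Qs ?c R0 G0 q vs qs S]) auto
      then show ?thesis by (simp add: invA_def)
    qed
  qed
qed


lemma count_mset_distinct: "distinct ws \<Longrightarrow> count (mset ws) v = (if v \<in> set ws then 1 else 0)"
  using distinct_count_atmost_1 by metis

lemma case_pend_done:
  assumes fin: "finite Qs" and I: "invA l Qs c" and ct: "ctl c = Pend q [] k"
  shows "invA l Qs (c\<lparr>ctl := k\<rparr>)"
proof -
  let ?c = "c\<lparr>ctl := k\<rparr>"
  show ?thesis
  proof (cases "inv12 c")
    case True
    then have "k = P2" "rnd c = 0" using ct by (auto simp: inv12_def)
    then show ?thesis by (simp add: invA_def inv12_def)
  next
    case False
    then have I3: "inv3 l Qs c" using I by (simp add: invA_def)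
    from inv3_PendE[OF I3 ct] show ?thesis
    proof (elim disjE exE conjE)
      fix qs R0 G0 S Done ws
      assume k: "k = S1Exec qs" and B: "base l Qs c R0 G0" and T: "st_exp Qs c R0 G0 S Done q [] qs ws"
      have core: "ex_core Qs c R0 G0 S Done" and SQ: "S \<subseteq> Qs"
        and dq: "distinct (q # qs)" and disj: "set (q # qs) \<inter> Done = {}" and Seq: "S = Done \<union> set (q # qs)"
        and dw: "distinct ws" and sw: "set ws = pillars (G0 q)"
        and gf: "\<forall>q'. grp c q' = (if q' \<in> Done then G0 q' - mset_set (pillars (G0 q'))
                      else if q' = q then G0 q - mset ws else G0 q')"
        and cf: "\<forall>w. count (res c) w \<le> count R0 w + card {q\<in>Done. w \<in> pillars (G0 q)} + count (mset ws) w"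
        using T unfolding st_exp_def ex_core_def by auto
      have finS: "finite S" using SQ fin finite_subset by blast
      have finD: "finite Done" using Seq finS by auto
      have qD: "q \<notin> Done" using disj by auto
      have mw: "mset ws = mset_set (pillars (G0 q))" using mset_set_set[OF dw] sw by simp
      have core': "ex_core Qs ?c R0 G0 S (insert q Done)"
        using core Seq unfolding ex_core_def by auto
      have gf': "\<forall>q'. grp ?c q' = (if q' \<in> insert q Done then G0 q' - mset_set (pillars (G0 q')) else G0 q')"
        using gf mw by auto
      have cf': "\<forall>w. count (res ?c) w \<le> count R0 w + card {q'\<in>insert q Done. w \<in> pillars (G0 q')}"
      proof
        fix w
        have "{q'\<in>insert q Done. w \<in> pillars (G0 q')} =
              (if w \<in> pillars (G0 q) then insert q {q'\<in>Done. w \<in> pillars (G0 q')} else {q'\<in>Done. w \<in> pillars (G0 q')})"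
          by auto
        then have "card {q'\<in>insert q Done. w \<in> pillars (G0 q')} = card {q'\<in>Done. w \<in> pillars (G0 q')} + (if w \<in> pillars (G0 q) then 1 else 0)"
          using finD qD by auto
        moreover have "count (mset ws) w = (if w \<in> pillars (G0 q) then 1 else 0)"
          using count_mset_distinct[OF dw] sw by simp
        ultimately show "count (res ?c) w \<le> count R0 w + card {q'\<in>insert q Done. w \<in> pillars (G0 q')}"
          using cf[rule_format, of w] by simp
      qed
      have "st_ex Qs ?c R0 G0 S (insert q Done) qs"
        unfolding st_ex_def using core' dq disj Seq gf' cf' by auto
      moreover have "base l Qs ?c R0 G0" using B by (simp add: base_def)
      ultimately have "inv3 l Qs ?c" using k by (intro inv3_S1XI[of l Qs ?c R0 G0 qs S "insert q Done"]) auto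
      then show ?thesis by (simp add: invA_def)
    next
      fix qs R0 G0 S
      assume k: "k = S2 (q # qs)" and B: "base l Qs c R0 G0" and T: "st_s2 l Qs c R0 G0 S (q # qs)"
        and PD: "pend2 l c q []" and EL: "\<forall>q'\<in>Qs. q' \<noteq> q \<longrightarrow> eligible l (grp c q')"
      obtain Gs ws where el: "eligible l Gs" and dw: "distinct ws" and sw: "set ws = pillars Gs"
        and gq: "grp c q = Gs - mset ws"
        using PD unfolding pend2_def by auto
      have "eligible l (grp c q)" using elig_diff_list[OF el dw sw] gq by simp
      then have EL': "\<forall>q'\<in>Qs. eligible l (grp ?c q')" using EL by auto
      have T': "st_s2 l Qs ?c R0 G0 S (q # qs)" using T by (simp add: st_s2_def)
      have "base l Qs ?c R0 G0" using B by (simp add: base_def)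
      then have "inv3 l Qs ?c" using k T' EL' by (intro inv3_S2I[of l Qs ?c R0 G0 "q # qs" S]) auto
      then show ?thesis by (simp add: invA_def)
    qed
  qed
qed

lemma case_s1x_done:
  assumes fin: "finite Qs" and I: "invA l Qs c" and ct: "ctl c = S1Exec []" and d: "distinct qs"
    and sq: "set qs = {q \<in> Qs. alive l (res c) (grp c q)}"
  shows "invA l Qs (c\<lparr>ctl := S2 qs\<rparr>)"
proof -
  let ?c = "c\<lparr>ctl := S2 qs\<rparr>"
  have "inv3 l Qs c" using I ct by (auto simp: invA_def inv12_def)
  then obtain R0 G0 S Done where B: "base l Qs c R0 G0" and T: "st_ex Qs c R0 G0 S Done []"
    using inv3_S1XE ct by blast
  have SQ: "S \<subseteq> Qs" and cov: "\<forall>v\<in>pillars R0. \<exists>q\<in>S. v \<notin> pillars (G0 q)"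
    and em: "\<forall>q\<in>S. G0 q \<noteq> {#}" and SD: "S = Done"
    and cons: "size R0 + (\<Sum>q\<in>S. size (G0 q)) \<le> size (res c) + (\<Sum>q\<in>S. size (grp c q))"
    and gf: "\<forall>q'. grp c q' = (if q' \<in> S then G0 q' - mset_set (pillars (G0 q')) else G0 q')"
    and cf: "\<forall>w. count (res c) w \<le> count R0 w + card {q\<in>S. w \<in> pillars (G0 q)}"
    using T unfolding st_ex_def ex_core_def by auto
  have finS: "finite S" using SQ fin finite_subset by blast
  have R0ne: "R0 \<noteq> {#}" using B not_elig_ne by (auto simp: base_def)
  have h0: "hmax R0 \<ge> 1" using hmax_pos[OF R0ne] .
  have Sne: "S \<noteq> {}" using pillars_ne[OF R0ne] cov by blast
  have cS: "card S \<ge> 1" using Sne finS by (simp add: Suc_le_eq card_gt_0_iff)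
  have "\<forall>w. count (res c) w \<le> hmax R0 + card S - 1"
  proof
    fix w
    show "count (res c) w \<le> hmax R0 + card S - 1"
    proof (cases "w \<in> pillars R0")
      case True
      then obtain q where qS: "q \<in> S" and nq: "w \<notin> pillars (G0 q)" using cov by blast
      have "{q\<in>S. w \<in> pillars (G0 q)} \<subset> S" using qS nq by auto
      then have "card {q\<in>S. w \<in> pillars (G0 q)} < card S" using finS psubset_card_mono by blast
      moreover have "count R0 w = hmax R0" using True by (simp add: pillars_def hv_def)
      ultimately show ?thesis using cf[rule_format, of w] by linarith
    next
      case False
      then have "count R0 w < hmax R0" by (rule nonpillar_lt)
      moreover have "card {q\<in>S. w \<in> pillars (G0 q)} \<le> card S" using finS by (intro card_mono) auto
      ultimately show ?thesis using cf[rule_format, of w] by linarith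
    qed
  qed
  then have "hmax (res c) \<le> hmax R0 + card S - 1" using hmax_le_iff by blast
  then have hb: "hmax (res c) + 1 \<le> hmax R0 + card S" using cS by linarith
  have gS: "\<forall>q\<in>S. hmax (grp c q) + 1 \<le> hmax (G0 q)"
    using gf em hmax_diff_pillars by auto
  have th: "\<forall>q\<in>S. q \<notin> set qs \<longrightarrow> thin l (grp c q)"
    using sq SQ by (auto simp: alive_def dead_def)
  have elG: "\<forall>q\<in>Qs. eligible l (G0 q)" using B by (simp add: base_def)
  have EL: "\<forall>q\<in>Qs. eligible l (grp c q)"
    using gf elG elig_diff_pillars by auto
  have "st_s2 l Qs ?c R0 G0 S qs"
    unfolding st_s2_def using SQ Sne hb cons gS th by auto
  moreover have "base l Qs ?c R0 G0" using B by (simp add: base_def)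
  ultimately have "inv3 l Qs ?c" using EL by (intro inv3_S2I[of l Qs ?c R0 G0 qs S]) auto
  then show ?thesis by (simp add: invA_def)
qed


lemma case_s2_dead:
  assumes I: "invA l Qs c" and ct: "ctl c = S2 (q # qs)" and dd: "dead l (res c) (grp c q)"
  shows "invA l Qs (c\<lparr>ctl := S2 qs\<rparr>)"
proof -
  let ?c = "c\<lparr>ctl := S2 qs\<rparr>"
  have "inv3 l Qs c" using I ct by (auto simp: invA_def inv12_def)
  then obtain R0 G0 S where B: "base l Qs c R0 G0" and T: "st_s2 l Qs c R0 G0 S (q # qs)"
    and EL: "\<forall>q\<in>Qs. eligible l (grp c q)"
    using inv3_S2E ct by blast
  have "st_s2 l Qs ?c R0 G0 S qs" using T dd unfolding st_s2_def dead_def by auto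
  moreover have "base l Qs ?c R0 G0" using B by (simp add: base_def)
  ultimately have "inv3 l Qs ?c" using EL by (intro inv3_S2I[of l Qs ?c R0 G0 qs S]) auto
  then show ?thesis by (simp add: invA_def)
qed

lemma case_s2_fat:
  assumes fin: "finite Qs" and I: "invA l Qs c" and ct: "ctl c = S2 (q # qs)" and ft: "fat l (grp c q)"
    and vin: "v \<in># grp c q" and vp: "v \<notin> pillars (res c)"
  shows "invA l Qs (mv q v c)"
proof -
  let ?c = "mv q v c"
  have "inv3 l Qs c" using I ct by (auto simp: invA_def inv12_def)
  then obtain R0 G0 S where B: "base l Qs c R0 G0" and T: "st_s2 l Qs c R0 G0 S (q # qs)"
    and EL: "\<forall>q\<in>Qs. eligible l (grp c q)"
    using inv3_S2E ct by blast
  have SQ: "S \<subseteq> Qs" using T by (simp add: st_s2_def)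
  have finS: "finite S" using SQ fin finite_subset by blast
  have hm: "hmax (res ?c) = hmax (res c)" using nonpillar_lt[OF vp] hmax_add_nonpillar by auto
  have "st_s2 l Qs ?c R0 G0 S (q # qs)"
    unfolding st_s2_def
  proof (intro conjI)
    show "S \<subseteq> Qs" "S \<noteq> {}" using T by (auto simp: st_s2_def)
    show "hmax (res ?c) + 1 \<le> hmax R0 + card S" using T hm by (simp add: st_s2_def)
    show "size R0 + (\<Sum>q\<in>S. size (G0 q)) \<le> size (res ?c) + (\<Sum>q\<in>S. size (grp ?c q))"
      using T cons_mv[OF _ finS, of R0 G0 c q v] by (simp add: st_s2_def)
    show "\<forall>q'\<in>S. hmax (grp ?c q') + 1 \<le> hmax (G0 q')"
    proof
      fix q' assume "q' \<in> S"
      then have "hmax (grp c q') + 1 \<le> hmax (G0 q')" using T by (simp add: st_s2_def)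
      moreover have "hmax (grp ?c q') \<le> hmax (grp c q')" using hmax_diff_le[of "grp c q" v] by auto
      ultimately show "hmax (grp ?c q') + 1 \<le> hmax (G0 q')" by linarith
    qed
    show "\<forall>q'\<in>S. q' \<notin> set (q # qs) \<longrightarrow> thin l (grp ?c q')"
      using T by (auto simp: st_s2_def)
  qed
  moreover have "\<forall>q'\<in>Qs. eligible l (grp ?c q')"
  proof
    fix q' assume q'Q: "q' \<in> Qs"
    show "eligible l (grp ?c q')"
    proof (cases "q' = q")
      case True
      have sz: "size (grp c q - {#v#}) = size (grp c q) - 1" using vin by (simp add: size_Diff_singleton)
      have A: "l * hmax (grp c q - {#v#}) \<le> l * hmax (grp c q)" using hmax_diff_le by (rule mult_le_mono2)
      have F: "l * hmax (grp c q) + 1 \<le> size (grp c q)" using ft by (simp add: fat_def)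
      have "l * hmax (grp c q - {#v#}) \<le> size (grp c q - {#v#})" using A F sz by linarith
      then show ?thesis using True by (simp add: eligible_def)
    next
      case False then show ?thesis using EL q'Q by simp
    qed
  qed
  moreover have "base l Qs ?c R0 G0" using B by (simp add: base_def)
  ultimately have "inv3 l Qs ?c" using ct by (intro inv3_S2I[of l Qs ?c R0 G0 "q # qs" S]) auto
  then show ?thesis by (simp add: invA_def)
qed

lemma case_s2_thin:
  assumes I: "invA l Qs c" and ct: "ctl c = S2 (q # qs)" and tn: "thin l (grp c q)"
    and nc: "\<not> conflicting (res c) (grp c q)" and d: "distinct vs" and sv: "set vs = pillars (grp c q)"
  shows "invA l Qs (c\<lparr>ctl := Pend q vs (S2 (q # qs))\<rparr>)"
proof -
  let ?c = "c\<lparr>ctl := Pend q vs (S2 (q # qs))\<rparr>"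
  have "inv3 l Qs c" using I ct by (auto simp: invA_def inv12_def)
  then obtain R0 G0 S where B: "base l Qs c R0 G0" and T: "st_s2 l Qs c R0 G0 S (q # qs)"
    and EL: "\<forall>q\<in>Qs. eligible l (grp c q)"
    using inv3_S2E ct by blast
  have T': "st_s2 l Qs ?c R0 G0 S (q # qs)" using T by (simp add: st_s2_def)
  have np: "\<forall>w\<in>set vs. w \<notin> pillars (res c)"
    using nc sv unfolding conflicting_def cpillars_def by auto
  have lt: "\<forall>w\<in>set vs. count (res ?c) w < hmax (res ?c)"
  proof
    fix w assume "w \<in> set vs"
    then have "w \<notin> pillars (res c)" using np by simp
    then show "count (res ?c) w < hmax (res ?c)" using nonpillar_lt by simp
  qed
  have PD: "pend2 l ?c q vs"
    unfolding pend2_def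
  proof (intro exI[of _ "grp c q"] exI[of _ "[]"] conjI)
    show "eligible l (grp c q)" using thin_elig[OF tn] .
    show "distinct ([] @ vs)" using d by simp
    show "set ([] @ vs) = pillars (grp c q)" using sv by simp
    show "grp ?c q = grp c q - mset []" by simp
    show "\<forall>w\<in>set vs. count (res ?c) w < hmax (res ?c)" by (rule lt)
  qed
  have "base l Qs ?c R0 G0" using B by (simp add: base_def)
  then have "inv3 l Qs ?c" using T' PD EL by (intro inv3_P2I[of l Qs ?c R0 G0 q vs qs S]) auto
  then show ?thesis by (simp add: invA_def)
qed

lemma case_s2_done:
  assumes fin: "finite Qs" and I: "invA l Qs c" and ne: "\<not> eligible l (res c)" and ct: "ctl c = S2 []"
  shows "invA l Qs (c\<lparr>ctl := S1 (pillars (res c)) {}, rnd := rnd c + 1\<rparr>)"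
proof -
  let ?c = "c\<lparr>ctl := S1 (pillars (res c)) {}, rnd := rnd c + 1\<rparr>"
  have "inv3 l Qs c" using I ct by (auto simp: invA_def inv12_def)
  then obtain R0 G0 S where B: "base l Qs c R0 G0" and T: "st_s2 l Qs c R0 G0 S []"
    and EL: "\<forall>q\<in>Qs. eligible l (grp c q)"
    using inv3_S2E ct by blast
  have SQ: "S \<subseteq> Qs" and hb: "hmax (res c) + 1 \<le> hmax R0 + card S"
    and cons: "size R0 + (\<Sum>q\<in>S. size (G0 q)) \<le> size (res c) + (\<Sum>q\<in>S. size (grp c q))"
    and gS: "\<forall>q\<in>S. hmax (grp c q) + 1 \<le> hmax (G0 q)"
    and th: "\<forall>q\<in>S. thin l (grp c q)"
    using T by (auto simp: st_s2_def)
  have r1: "1 \<le> rnd c" and elG: "\<forall>q\<in>Qs. eligible l (G0 q)"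
    and old: "l * (rnd c - 1) + l * hmax R0 + size (rdd c) \<le> l * hmax (rdd c) + size R0"
    using B by (auto simp: base_def)
  have each: "size (grp c q) + l \<le> size (G0 q)" if "q \<in> S" for q
  proof -
    have a: "size (grp c q) = l * hmax (grp c q)" using th that by (simp add: thin_def)
    have b: "l * hmax (G0 q) \<le> size (G0 q)" using elG SQ that by (auto simp: eligible_def)
    have "l * (hmax (grp c q) + 1) \<le> l * hmax (G0 q)" using gS that by (intro mult_le_mono2) auto
    then show ?thesis using a b by (simp add: algebra_simps)
  qed
  have "(\<Sum>q\<in>S. size (grp c q) + l) \<le> (\<Sum>q\<in>S. size (G0 q))"
    using each by (rule sum_mono)
  then have ssum: "(\<Sum>q\<in>S. size (grp c q)) + l * card S \<le> (\<Sum>q\<in>S. size (G0 q))"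
    by (simp add: sum.distrib mult.commute)
  have sR: "size R0 + l * card S \<le> size (res c)" using ssum cons by linarith
  have hR: "l * hmax (res c) + l \<le> l * hmax R0 + l * card S"
  proof -
    have "l * (hmax (res c) + 1) \<le> l * (hmax R0 + card S)" using hb by (rule mult_le_mono2)
    then show ?thesis by (simp add: algebra_simps)
  qed
  obtain k where kk: "rnd c = Suc k" using r1 by (cases "rnd c") auto
  have rr: "l * (rnd c + 1 - 1) = l * (rnd c - 1) + l" using kk by simp
  have "l * (rnd ?c - 1) + l * hmax (res c) + size (rdd ?c) \<le> l * hmax (rdd ?c) + size (res c)"
    using old sR hR rr by simp
  then have "base l Qs ?c (res c) (grp c)"
    unfolding base_def using ne EL by simp
  moreover have "st_s1 l Qs ?c (res c) (grp c) (pillars (res c)) {}" by (simp add: st_s1_def)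
  ultimately have "inv3 l Qs ?c" by (intro inv3_S1I[of l Qs ?c "res c" "grp c" "pillars (res c)" "{}"]) auto
  then show ?thesis by (simp add: invA_def)
qed


lemma inv12_P1: "invA l Qs c \<Longrightarrow> ctl c = P1 qs \<Longrightarrow> inv12 c"
  using inv3_notP1[of l Qs c qs] by (auto simp: invA_def)
lemma inv12_P2: "invA l Qs c \<Longrightarrow> ctl c = P2 \<Longrightarrow> inv12 c"
  using inv3_notP2[of l Qs c] by (auto simp: invA_def)

lemma step_inv:
  assumes fin: "finite Qs" and st: "step l Qs c c'" and I: "invA l Qs c"
  shows "invA l Qs c'"
  using st I
proof (induction rule: step.induct)
  case (p1_move c q qs v)
  then have "inv12 c" using inv12_P1 by blast
  then show ?case using p1_move by (auto simp: invA_def inv12_def)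
next
  case (p1_next c q qs)
  then have "inv12 c" using inv12_P1 by blast
  then show ?case by (auto simp: invA_def inv12_def)
next
  case (p1_done c)
  then have "inv12 c" using inv12_P1 by blast
  then show ?case by (auto simp: invA_def inv12_def)
next
  case (pend_move c q v vs k)
  show ?case using case_pend_move[OF fin pend_move.prems pend_move.hyps(2)] .
next
  case (pend_done c q k)
  show ?case using case_pend_done[OF fin pend_done.prems pend_done.hyps(2)] .
next
  case (p2_to3 c)
  show ?case using case_p2_to3[OF p2_to3.prems p2_to3.hyps] .
next
  case (p2_fat c v q)
  then have "inv12 c" using inv12_P2 by blast
  then show ?case using p2_fat by (auto simp: invA_def inv12_def)
next
  case (p2_thin c v q vs)
  then have "inv12 c" using inv12_P2 by blast
  then show ?case by (auto simp: invA_def inv12_def)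
next
  case (s1_pick c P S q)
  show ?case using case_s1_pick[OF s1_pick.prems s1_pick.hyps] .
next
  case (s1_exec c S qs)
  show ?case using case_s1_exec[OF s1_exec.prems s1_exec.hyps(2-4)] .
next
  case (s1x_step c q qs vs)
  show ?case using case_s1x_step[OF s1x_step.prems s1x_step.hyps(2-4)] .
next
  case (s1x_done c qs)
  show ?case using case_s1x_done[OF fin s1x_done.prems s1x_done.hyps(2-4)] .
next
  case (s2_dead c q qs)
  show ?case using case_s2_dead[OF s2_dead.prems s2_dead.hyps(2-3)] .
next
  case (s2_fat c q qs v)
  show ?case using case_s2_fat[OF fin s2_fat.prems s2_fat.hyps(2-5)] .
next
  case (s2_thin c q qs vs)
  show ?case using case_s2_thin[OF s2_thin.prems s2_thin.hyps(2-6)] .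
next
  case (s2_done c)
  show ?case using case_s2_done[OF fin s2_done.prems s2_done.hyps] .
qed

theorem lemma9:
  fixes T :: "('q \<times> 'v) multiset" and l :: nat and qs :: "'q list"
    and c :: "('q, 'v) conf"
  assumes "eligible l (image_mset snd T)"
    and "distinct qs" and "set qs = group_ids T"
    and "(step l (group_ids T))\<^sup>*\<^sup>* (init_conf T qs) c"
  shows "rnd c \<le> hmax (rdd c)"
proof -
  have fin: "finite (group_ids T)" by (simp add: group_ids_def)
  have "invA l (group_ids T) (init_conf T qs)" by (simp add: invA_def inv12_def init_conf_def)
  with assms(4) have "invA l (group_ids T) c"
  proof (induction rule: rtranclp_induct)
    case base then show ?case .
  next
    case (step y z) then show ?case using step_inv[OF fin] by blast
  qed
  then show ?thesis using inv3_final by (auto simp: invA_def inv12_def)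
qed

end
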